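(* For every algebra $A$, the anti-rotor $\mathfrak{u}_A$ has dimension at least $1$.
   Context: An "algebra" is a real finite-dimensional unital associative algebra with underlying vector space $\mathbb{R}^n$ ($n\ge1$), standard basis, elements column vectors $s=(x_1,\dots,x_n)^T$, $\mathbf{d}s=(dx_1,\dots,dx_n)^T$. An uncurling metric of $A$ is a real symmetric $n\times n$ matrix $L$ with $d\big((s^{-1})^TL\,\mathbf{d}s\big)=0$ on an open ball centered at $\mathbf{1}_A$ consisting only of units; the anti-rotor $\mathfrak{u}_A$ is the real vector space of all uncurling metrics of $A$. *)

theory Defs
  imports "HOL-Analysis.Analysis"
begin

definition is_algebra :: "(real^'n \<Rightarrow> real^'n \<Rightarrow> real^'n) \<Rightarrow> real^'n \<Rightarrow> bool" where
  "is_algebra m e \<longleftrightarrow> bilinear m \<and> (\<forall>x y z. m (m x y) z = m x (m y z)) \<and> (\<forall>x. m e x = x \<and> m x e = x)"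

definition alg_unit :: "(real^'n \<Rightarrow> real^'n \<Rightarrow> real^'n) \<Rightarrow> real^'n \<Rightarrow> real^'n \<Rightarrow> bool" where
  "alg_unit m e s \<longleftrightarrow> (\<exists>t. m s t = e \<and> m t s = e)"

definition alg_inv :: "(real^'n \<Rightarrow> real^'n \<Rightarrow> real^'n) \<Rightarrow> real^'n \<Rightarrow> real^'n \<Rightarrow> real^'n" where
  "alg_inv m e s = (THE t. m s t = e \<and> m t s = e)"

text \<open>The 1-form sum_j f_j(s) dx_j (coefficient vector f) is closed on U:
  f is differentiable at each point of U and d_i f_j = d_j f_i.\<close>
definition closed_one_form :: "(real^'n \<Rightarrow> real^'n) \<Rightarrow> (real^'n) set \<Rightarrow> bool" where
  "closed_one_form f U \<longleftrightarrow> (\<forall>s\<in>U. \<exists>D. (f has_derivative D) (at s) \<and>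
      (\<forall>i j. D (axis i 1) $ j = D (axis j 1) $ i))"

text \<open>(s^{-1})^T L ds has coefficient vector s^{-1} v* L.\<close>
definition uncurling_metric :: "(real^'n \<Rightarrow> real^'n \<Rightarrow> real^'n) \<Rightarrow> real^'n \<Rightarrow> real^'n^'n \<Rightarrow> bool" where
  "uncurling_metric m e L \<longleftrightarrow> transpose L = L \<and>
     (\<exists>r>0. ball e r \<subseteq> {s. alg_unit m e s} \<and>
        closed_one_form (\<lambda>s. alg_inv m e s v* L) (ball e r))"

definition anti_rotor :: "(real^'n \<Rightarrow> real^'n \<Rightarrow> real^'n) \<Rightarrow> real^'n \<Rightarrow> (real^'n^'n) set" where
  "anti_rotor m e = {L. uncurling_metric m e L}"

end

theory Submission
  imports Defs
begin

context
  fixes m :: "real^'n \<Rightarrow> real^'n \<Rightarrow> real^'n" and e :: "real^'n"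
  assumes alg: "is_algebra m e"
begin

lemma bil: "bilinear m" using alg unfolding is_algebra_def by auto
lemma assoc: "m (m x y) z = m x (m y z)" using alg unfolding is_algebra_def by auto
lemma unitl[simp]: "m e x = x" using alg unfolding is_algebra_def by auto
lemma unitr[simp]: "m x e = x" using alg unfolding is_algebra_def by auto
lemma bbil: "bounded_bilinear m" using bil bilinear_conv_bounded_bilinear by blast
lemma linr: "linear (m x)" using bil unfolding bilinear_def by auto
lemma linl: "linear (\<lambda>x. m x y)" using bil unfolding bilinear_def by auto

lemma inv_eq:
  assumes "m s t = e" "m t s = e"
  shows "alg_inv m e s = t"
  unfolding alg_inv_def
proof (rule the_equality)
  show "m s t = e \<and> m t s = e" using assms by auto
  fix t' assume "m s t' = e \<and> m t' s = e"
  then have "t' = m t' (m s t)" using assms by simp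
  also have "\<dots> = m (m t' s) t" by (simp add: assoc)
  also have "\<dots> = t" using \<open>m s t' = e \<and> m t' s = e\<close> by simp
  finally show "t' = t" .
qed

lemma inv_props:
  assumes "alg_unit m e s"
  shows "m s (alg_inv m e s) = e" "m (alg_inv m e s) s = e"
proof -
  obtain t where "m s t = e" "m t s = e" using assms unfolding alg_unit_def by auto
  with inv_eq show "m s (alg_inv m e s) = e" "m (alg_inv m e s) s = e" by auto
qed

lemma det_unit:
  assumes "det (matrix (m s)) \<noteq> 0"
  shows "alg_unit m e s"
proof -
  have "inj (m s)" using det_nz_iff_inj[OF linr] assms by blast
  then have "surj (m s)" using linear_inj_imp_surj[OF linr] by blast
  then obtain t where t: "m s t = e" by (metis surjD)
  have "m s (m t s) = m s e" by (simp add: assoc[symmetric] t)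
  then have "m t s = e" using \<open>inj (m s)\<close> by (meson injD)
  with t show ?thesis unfolding alg_unit_def by auto
qed

lemma cont_det: "continuous (at s) (\<lambda>s. det (matrix (m s)))"
  unfolding det_def matrix_def
  apply (simp)
  apply (intro continuous_intros)
  by (intro linear_continuous_at bounded_bilinear.bounded_linear_left[OF bbil])

lemma bound3: obtains C where "C > 0" "\<And>a b c. norm (m (m a b) c) \<le> C * norm a * norm b * norm c"
proof -
  obtain K where K: "K > 0" "\<And>a b. norm (m a b) \<le> norm a * norm b * K"
    using bounded_bilinear.pos_bounded[OF bbil] by blast
  have "norm (m (m a b) c) \<le> (K*K) * norm a * norm b * norm c" for a b c
  proof -
    have "norm (m (m a b) c) \<le> norm (m a b) * norm c * K" by (rule K(2))
    also have "\<dots> \<le> (norm a * norm b * K) * norm c * K"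
      using K by (intro mult_right_mono) auto
    finally show ?thesis by (simp add: algebra_simps)
  qed
  then show ?thesis using that K by (metis mult_pos_pos)
qed

lemma inv_ident:
  assumes "alg_unit m e z" "alg_unit m e s"
  shows "alg_inv m e z - alg_inv m e s = m (m (alg_inv m e z) (s - z)) (alg_inv m e s)"
    "alg_inv m e z - alg_inv m e s + m (m (alg_inv m e s) (z - s)) (alg_inv m e s)
       = m (m (alg_inv m e z - alg_inv m e s) (s - z)) (alg_inv m e s)"
proof -
  let ?z = "alg_inv m e z" and ?u = "alg_inv m e s"
  have 1: "m (m ?z (s - z)) ?u = ?z - ?u"
    using inv_props[OF assms(1)] inv_props[OF assms(2)]
    by (simp add: bilinear_rsub[OF bil] bilinear_lsub[OF bil] assoc)
  then show "?z - ?u = m (m ?z (s - z)) ?u" by simp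
  have "m (m ?u (z - s)) ?u = - m (m ?u (s - z)) ?u"
    by (metis bilinear_lneg[OF bil] bilinear_rneg[OF bil] minus_diff_eq)
  then show "?z - ?u + m (m ?u (z - s)) ?u = m (m (?z - ?u) (s - z)) ?u"
    using 1 by (simp add: bilinear_lsub[OF bil])
qed

lemma inv_deriv:
  assumes U: "open U" "U \<subseteq> {s. alg_unit m e s}" "s \<in> U"
  shows "(alg_inv m e has_derivative (\<lambda>h. - m (m (alg_inv m e s) h) (alg_inv m e s))) (at s)"
proof -
  obtain C where C: "C > 0" "\<And>a b c. norm (m (m a b) c) \<le> C * norm a * norm b * norm c"
    using bound3 by blast
  let ?u = "alg_inv m e s"
  define N where "N = norm ?u"
  have N0: "N \<ge> 0" unfolding N_def by simp
  obtain d1 where d1: "d1 > 0" "ball s d1 \<subseteq> U" using U openE by blast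
  define d0 where "d0 = min d1 (1 / (2 * C * N + 1))"
  have d0: "d0 > 0" using d1 C N0 unfolding d0_def by (simp add: add_nonneg_pos)
  have us: "alg_unit m e s" using U by auto
  have lip: "norm (alg_inv m e z - ?u) \<le> 2 * C * N * N * norm (z - s)"
    if z: "norm (z - s) < d0" for z
  proof -
    have "z \<in> U" using z d1 unfolding d0_def by (auto simp: dist_norm norm_minus_commute)
    then have uz: "alg_unit m e z" using U by auto
    let ?z = "alg_inv m e z"
    have small: "C * N * norm (z - s) \<le> 1/2"
    proof -
      have a: "norm (z - s) \<le> 1 / (2 * C * N + 1)" using z unfolding d0_def by simp
      have pos: "0 < 2 * C * N + 1" using C N0 by (simp add: add_nonneg_pos)
      have "norm (z - s) * (2 * C * N + 1) \<le> 1"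
        using iffD1[OF pos_le_divide_eq[OF pos] a] .
      then have "(2 * C * N + 1) * norm (z - s) \<le> 1" by (simp only: mult.commute)
      then have "2 * (C * N * norm (z - s)) + norm (z - s) \<le> 1" by (simp add: algebra_simps)
      then show ?thesis using norm_ge_zero[of "z - s"] by linarith
    qed
    have e1: "norm (?z - ?u) \<le> C * norm ?z * norm (z - s) * N"
      using inv_ident(1)[OF uz us] C(2)[of ?z "s - z" ?u] by (simp add: N_def norm_minus_commute)
    have "norm ?z \<le> norm (?z - ?u) + N" unfolding N_def by (metis norm_triangle_sub add.commute)
    also have "\<dots> \<le> norm ?z * (C * N * norm (z - s)) + N" using e1 by (simp add: algebra_simps)
    also have "\<dots> \<le> norm ?z * (1/2) + N" using small by (intro add_right_mono mult_left_mono) auto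
    finally have bz: "norm ?z \<le> 2 * N" by simp
    have "norm (?z - ?u) \<le> C * (2 * N) * norm (z - s) * N"
    proof -
      have "C * norm ?z * norm (z - s) * N \<le> C * (2 * N) * norm (z - s) * N"
        by (intro mult_right_mono mult_left_mono) (use bz C N0 in auto)
      then show ?thesis using e1 by linarith
    qed
    then show ?thesis by (simp add: algebra_simps)
  qed
  have bl: "bounded_linear (\<lambda>h. - m (m ?u h) ?u)"
  proof -
    have "bounded_linear (\<lambda>h. m (m ?u h) ?u)"
      using bounded_bilinear.bounded_linear_left[OF bbil] bounded_bilinear.bounded_linear_right[OF bbil]
      by (rule bounded_linear_compose)
    then show ?thesis by (rule bounded_linear_minus)
  qed
  show ?thesis
    unfolding has_derivative_at_alt
  proof (intro conjI bl allI impI)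
    fix \<epsilon> :: real assume "\<epsilon> > 0"
    define d where "d = min d0 (\<epsilon> / (2 * C * C * N * N * N + 1))"
    have "d > 0" using d0 \<open>\<epsilon> > 0\<close> C N0 unfolding d_def by (simp add: add_nonneg_pos)
    show "\<exists>d>0. \<forall>z. norm (z - s) < d \<longrightarrow>
      norm (alg_inv m e z - ?u - - m (m ?u (z - s)) ?u) \<le> \<epsilon> * norm (z - s)"
    proof (intro exI conjI allI impI)
      show "d > 0" by fact
      fix z assume z: "norm (z - s) < d"
      then have zd0: "norm (z - s) < d0" unfolding d_def by simp
      then have "z \<in> U" using d1 unfolding d0_def by (auto simp: dist_norm norm_minus_commute)
      then have uz: "alg_unit m e z" using U by auto
      let ?z = "alg_inv m e z"
      have "norm (?z - ?u - - m (m ?u (z - s)) ?u) = norm (m (m (?z - ?u) (s - z)) ?u)"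
        using inv_ident(2)[OF uz us] by simp
      also have "\<dots> \<le> C * norm (?z - ?u) * norm (s - z) * N"
        using C(2) unfolding N_def by blast
      also have "\<dots> = C * norm (?z - ?u) * norm (z - s) * N"
        by (simp add: norm_minus_commute)
      also have "\<dots> \<le> C * (2 * C * N * N * norm (z - s)) * norm (z - s) * N"
        using lip[OF zd0] C N0 by (intro mult_right_mono mult_left_mono) auto
      also have "\<dots> = (2 * C * C * N * N * N * norm (z - s)) * norm (z - s)"
        by (simp add: algebra_simps)
      also have "\<dots> \<le> \<epsilon> * norm (z - s)"
      proof (rule mult_right_mono)
        have a: "norm (z - s) \<le> \<epsilon> / (2 * C * C * N * N * N + 1)" using z unfolding d_def by simp
        have pos: "0 < 2 * C * C * N * N * N + 1" using C N0 by (simp add: add_nonneg_pos)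
        have "norm (z - s) * (2 * C * C * N * N * N + 1) \<le> \<epsilon>"
          using iffD1[OF pos_le_divide_eq[OF pos] a] .
        then have "(2 * C * C * N * N * N + 1) * norm (z - s) \<le> \<epsilon>" by (simp only: mult.commute)
        then have "2 * C * C * N * N * N * norm (z - s) + norm (z - s) \<le> \<epsilon>"
          by (simp add: algebra_simps)
        then show "2 * C * C * N * N * N * norm (z - s) \<le> \<epsilon>"
          using norm_ge_zero[of "z - s"] by linarith
      qed simp
      finally show "norm (?z - ?u - - m (m ?u (z - s)) ?u) \<le> \<epsilon> * norm (z - s)" .
    qed
  qed
qed

definition phi :: "real^'n \<Rightarrow> real" where
  "phi x = (\<Sum>i\<in>UNIV. m x (axis i 1) $ i)"

lemma phi_trace: "phi x = trace (matrix (m x))"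
  by (simp add: phi_def trace_def matrix_def)

lemma phi_comm: "phi (m a b) = phi (m b a)"
proof -
  have c: "m (m a b) = m a \<circ> m b" for a b by (rule ext) (simp add: assoc)
  show ?thesis unfolding phi_trace c matrix_compose[OF linr linr]
    by (rule trace_mul_sym)
qed

lemma phi_lin: "linear phi"
proof (rule linearI)
  fix x y :: "real^'n" and c :: real
  show "phi (x + y) = phi x + phi y"
    by (simp add: phi_def bilinear_ladd[OF bil] sum.distrib)
  show "phi (c *\<^sub>R x) = c *\<^sub>R phi x"
    by (simp add: phi_def bilinear_lmul[OF bil] sum_distrib_left)
qed

lemma psi_lin: "linear (\<lambda>x. phi (m x c))"
  using linear_compose[OF linl phi_lin, of c] by (simp add: o_def)

definition LL :: "real^'n^'n" where
  "LL = (\<chi> i j. phi (m (axis i 1) (axis j 1)))"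

lemma lin_expand:
  assumes "linear f"
  shows "f (x::real^'n) = (\<Sum>i\<in>UNIV. x $ i * f (axis i 1))"
proof -
  have "f x = f (\<Sum>i\<in>UNIV. x $ i *\<^sub>R axis i 1)"
    using basis_expansion[of x] by (simp add: scalar_mult_eq_scaleR)
  also have "\<dots> = (\<Sum>i\<in>UNIV. x $ i * f (axis i 1))"
    by (simp add: linear_sum[OF assms] linear_scale[OF assms])
  finally show ?thesis .
qed

lemma vmL: "(x v* LL) $ j = phi (m x (axis j 1))"
  unfolding vector_matrix_mult_def LL_def
  using lin_expand[OF psi_lin[of "axis j 1"], of x] by simp

lemma LL_sym: "transpose LL = LL"
  unfolding LL_def transpose_def by (simp add: phi_comm)

lemma vmL_tr: "x v* LL = transpose LL *v x"
  by (simp add: vec_eq_iff vector_matrix_mult_def matrix_vector_mult_def transpose_def mult.commute)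

lemma vmL_bl: "bounded_linear (\<lambda>x. x v* LL)"
proof -
  have "(\<lambda>x. x v* LL) = (*v) (transpose LL)" by (rule ext) (rule vmL_tr)
  then show ?thesis by simp
qed

lemma LL_nz: "LL \<noteq> 0"
proof
  assume "LL = 0"
  then have z: "phi (axis j 1) = 0" for j using vmL[of e j] by simp
  have "phi e = (\<Sum>i\<in>UNIV. e $ i * phi (axis i 1))" by (rule lin_expand[OF phi_lin])
  also have "\<dots> = 0" using z by simp
  finally have "phi e = 0" .
  moreover have "phi e = real CARD('n)" unfolding phi_def by (simp add: axis_def)
  ultimately show False by simp
qed

lemma LL_in: "uncurling_metric m e LL"
  unfolding uncurling_metric_def
proof (intro conjI LL_sym)
  have "det (matrix (m e)) = 1"
  proof -
    have "m e = id" by (rule ext) simp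
    then show ?thesis by simp
  qed
  then obtain r where r: "r > 0" "\<And>y. dist e y < r \<Longrightarrow> det (matrix (m y)) \<noteq> 0"
    using continuous_at_avoid[OF cont_det, of e 0] by auto
  have sub: "ball e r \<subseteq> {s. alg_unit m e s}" using r det_unit by auto
  show "\<exists>r>0. ball e r \<subseteq> {s. alg_unit m e s} \<and>
          closed_one_form (\<lambda>s. alg_inv m e s v* LL) (ball e r)"
  proof (rule exI[of _ r], intro conjI)
    show "r > 0" by (rule r(1))
    show "ball e r \<subseteq> {s. alg_unit m e s}" by (rule sub)
    show "closed_one_form (\<lambda>s. alg_inv m e s v* LL) (ball e r)"
      unfolding closed_one_form_def
    proof
      fix s assume s: "s \<in> ball e r"
      let ?u = "alg_inv m e s"
      have d: "(alg_inv m e has_derivative (\<lambda>h. - m (m ?u h) ?u)) (at s)"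
        by (rule inv_deriv[OF open_ball sub s])
      have d2: "((\<lambda>s. alg_inv m e s v* LL) has_derivative (\<lambda>h. (- m (m ?u h) ?u) v* LL)) (at s)"
        using bounded_linear.has_derivative[OF vmL_bl d] .
      have sym: "((- m (m ?u (axis i 1)) ?u) v* LL) $ j = ((- m (m ?u (axis j 1)) ?u) v* LL) $ i" for i j
      proof -
        have "((- m (m ?u (axis i 1)) ?u) v* LL) $ j = - phi (m (m ?u (axis i 1)) (m ?u (axis j 1)))"
          unfolding vmL by (simp add: bilinear_lneg[OF bil] linear_neg[OF phi_lin] assoc)
        moreover have "((- m (m ?u (axis j 1)) ?u) v* LL) $ i = - phi (m (m ?u (axis j 1)) (m ?u (axis i 1)))"
          unfolding vmL by (simp add: bilinear_lneg[OF bil] linear_neg[OF phi_lin] assoc)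
        ultimately show ?thesis using phi_comm by simp
      qed
      show "\<exists>D. ((\<lambda>s. alg_inv m e s v* LL) has_derivative D) (at s) \<and>
             (\<forall>i j. D (axis i 1) $ j = D (axis j 1) $ i)"
        using d2 sym by blast
    qed
  qed
qed

end

theorem corollary8p4:
  fixes m :: "real^'n \<Rightarrow> real^'n \<Rightarrow> real^'n" and e :: "real^'n"
  assumes "is_algebra m e"
  shows "dim (anti_rotor m e) \<ge> 1"
proof -
  have "LL m \<in> anti_rotor m e" using LL_in[OF assms] unfolding anti_rotor_def by simp
  moreover have "LL m \<noteq> 0" using LL_nz[OF assms] .
  ultimately have "\<not> anti_rotor m e \<subseteq> {0}" by blast
  then have "dim (anti_rotor m e) \<noteq> 0" by simp
  then show ?thesis by linarith
qed

end
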